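(* Let $\Omega\subseteq\mathbb{R}^{m\times m}$, let $\mathcal{P}\subseteq\mathbb{R}^{m\times m}$, and let $s:\Omega^2\times\mathcal{P}\to\mathbb{R}$ be a $P$-score. Let $n\ge 2$ and define the $\mathcal{G}$-align distance function induced by $s$ as $d_{\mathcal{G}}:\Omega^n\to\mathbb{R}$, $$d_{\mathcal{G}}(A_1,\dots,A_n)=\min_{P\in S}\frac12\sum_{i,j\in[n]} s(A_i,A_j,P_{i,j}),$$ where $S$ is the set of families $\{P_{i,j}\}_{i,j\in[n]}$ with $P_{i,j}\in\mathcal{P}$ for all $i,j$, $P_{i,k}P_{k,j}=P_{i,j}$ for all $i,j,k\in[n]$, and $P_{i,i}=I$ for all $i\in[n]$. Then $d_{\mathcal{G}}$ is a pseudo $n$-metric.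
   Context: $[n]=\{1,\dots,n\}$. A map $s:\Omega^2\times\mathcal{P}\to\mathbb{R}$ is a $P$-score if $\mathcal{P}$ is closed under inversion (and, implicitly, contains $I$ and the products appearing below), and for all $P,P'\in\mathcal{P}$ and $A,B,C\in\Omega$: $s(A,B,P)\ge 0$; $s(A,A,I)=0$; $s(A,B,P)=s(B,A,P^{-1})$; $s(A,B,P)+s(B,C,P')\ge s(A,C,PP')$. Notation: $A_{1:n}=(A_1,\dots,A_n)$; for $A_{n+1}\in\Omega$, $A^i_{1:n,n+1}$ is $A_{1:n}$ with $A_i$ replaced by $A_{n+1}$; $A_{\sigma(1:n)}$ is the sequence with $i$-th entry $A_{\sigma(i)}$ for a permutation $\sigma$. A map $D:\Omega^n\to\mathbb{R}$ is a pseudo $n$-metric if for all $A_1,\dots,A_{n+1}\in\Omega$ and all permutations $\sigma$: $D(A_{1:n})\ge0$; $D(A_{1:n})=D(A_{\sigma(1:n)})$; $D(A_{1:n})\le\sum_{i=1}^n D(A^i_{1:n,n+1})$; and $D(A,\dots,A)=0$ for all $A\in\Omega$. *)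

theory Defs
  imports "HOL-Analysis.Analysis" "HOL-Combinatorics.Permutations"
begin

type_synonym 'm mat = "real^'m^'m"

text \<open>The set \<P> is assumed to contain
  the identity, to be closed under inversion (its elements being invertible) and under the
  products appearing in the triangle inequality.\<close>
definition is_P_score :: "'m::finite mat set \<Rightarrow> 'm mat set \<Rightarrow> ('m mat \<Rightarrow> 'm mat \<Rightarrow> 'm mat \<Rightarrow> real) \<Rightarrow> bool" where
  "is_P_score \<Omega> \<P> s \<longleftrightarrow>
     mat 1 \<in> \<P> \<and>
     (\<forall>P\<in>\<P>. invertible P \<and> matrix_inv P \<in> \<P>) \<and>
     (\<forall>P\<in>\<P>. \<forall>P'\<in>\<P>. P ** P' \<in> \<P>) \<and>
     (\<forall>A\<in>\<Omega>. \<forall>B\<in>\<Omega>. \<forall>P\<in>\<P>. s A B P \<ge> 0) \<and>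
     (\<forall>A\<in>\<Omega>. s A A (mat 1) = 0) \<and>
     (\<forall>A\<in>\<Omega>. \<forall>B\<in>\<Omega>. \<forall>P\<in>\<P>. s A B P = s B A (matrix_inv P)) \<and>
     (\<forall>A\<in>\<Omega>. \<forall>B\<in>\<Omega>. \<forall>C\<in>\<Omega>. \<forall>P\<in>\<P>. \<forall>P'\<in>\<P>. s A B P + s B C P' \<ge> s A C (P ** P'))"

definition pseudo_n_metric :: "'a set \<Rightarrow> nat \<Rightarrow> ((nat \<Rightarrow> 'a) \<Rightarrow> real) \<Rightarrow> bool" where
  "pseudo_n_metric \<Omega> n D \<longleftrightarrow>
     (\<forall>A. (\<forall>i\<in>{1..n}. A i \<in> \<Omega>) \<longrightarrow> D A \<ge> 0) \<and>
     (\<forall>A \<sigma>. (\<forall>i\<in>{1..n}. A i \<in> \<Omega>) \<longrightarrow> \<sigma> permutes {1..n} \<longrightarrow> D A = D (\<lambda>i. A (\<sigma> i))) \<and>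
     (\<forall>A. (\<forall>i\<in>{1..Suc n}. A i \<in> \<Omega>) \<longrightarrow> D A \<le> (\<Sum>i=1..n. D (A(i := A (Suc n))))) \<and>
     (\<forall>X\<in>\<Omega>. D (\<lambda>_. X) = 0)"

definition sync_families :: "'m::finite mat set \<Rightarrow> nat \<Rightarrow> (nat \<Rightarrow> nat \<Rightarrow> 'm mat) set" where
  "sync_families \<P> n = {P.
     (\<forall>i\<in>{1..n}. \<forall>j\<in>{1..n}. P i j \<in> \<P>) \<and>
     (\<forall>i\<in>{1..n}. \<forall>j\<in>{1..n}. \<forall>k\<in>{1..n}. P i k ** P k j = P i j) \<and>
     (\<forall>i\<in>{1..n}. P i i = mat 1)}"

text \<open>G-align distance; the minimum of the paper is rendered as an infimum.\<close>
definition G_align_dist :: "('m::finite mat \<Rightarrow> 'm mat \<Rightarrow> 'm mat \<Rightarrow> real) \<Rightarrow> 'm mat set \<Rightarrow> nat \<Rightarrow> (nat \<Rightarrow> 'm mat) \<Rightarrow> real" where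
  "G_align_dist s \<P> n A = Inf ((\<lambda>P. (1/2) * (\<Sum>i=1..n. \<Sum>j=1..n. s (A i) (A j) (P i j))) ` sync_families \<P> n)"

end

theory Submission
  imports Defs
begin

lemma minv:
  fixes A :: "'m::finite mat"
  assumes "invertible A"
  shows "A ** matrix_inv A = mat 1" "matrix_inv A ** A = mat 1"
proof -
  have "\<exists>A'. A ** A' = mat 1 \<and> A' ** A = mat 1" using assms unfolding invertible_def by blast
  hence "A ** matrix_inv A = mat 1 \<and> matrix_inv A ** A = mat 1"
    unfolding matrix_inv_def by (rule someI_ex)
  thus "A ** matrix_inv A = mat 1" "matrix_inv A ** A = mat 1" by auto
qed

definition cost :: "('m::finite mat \<Rightarrow> 'm mat \<Rightarrow> 'm mat \<Rightarrow> real) \<Rightarrow> nat \<Rightarrow> (nat \<Rightarrow> 'm mat) \<Rightarrow> (nat \<Rightarrow> nat \<Rightarrow> 'm mat) \<Rightarrow> real" where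
  "cost s n A P = (\<Sum>i=1..n. \<Sum>j=1..n. s (A i) (A j) (P i j))"

lemma G_def: "G_align_dist s \<P> n A = Inf ((\<lambda>P. (1/2) * cost s n A P) ` sync_families \<P> n)"
  unfolding G_align_dist_def cost_def by simp

lemma sync_id:
  assumes "is_P_score \<Omega> \<P> s"
  shows "(\<lambda>i j. mat 1) \<in> sync_families \<P> n"
  using assms unfolding is_P_score_def sync_families_def by simp

lemma sync_inv:
  assumes "is_P_score \<Omega> \<P> s" "P \<in> sync_families \<P> n" "i \<in> {1..n}" "j \<in> {1..n}"
  shows "P j i = matrix_inv (P i j)"
proof -
  have "P i j \<in> \<P>" using assms unfolding sync_families_def by auto
  hence inv: "invertible (P i j)" using assms(1) unfolding is_P_score_def by blast
  have e: "P i j ** P j i = mat 1" using assms unfolding sync_families_def by auto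
  have "matrix_inv (P i j) = matrix_inv (P i j) ** (P i j ** P j i)" using e by simp
  also have "\<dots> = P j i" by (simp add: matrix_mul_assoc minv[OF inv])
  finally show ?thesis by simp
qed

lemma cost_nonneg:
  assumes "is_P_score \<Omega> \<P> s" "P \<in> sync_families \<P> n" "\<forall>i\<in>{1..n}. A i \<in> \<Omega>"
  shows "cost s n A P \<ge> 0"
  unfolding cost_def
  using assms unfolding is_P_score_def sync_families_def
  by (intro sum_nonneg) auto

lemma D_props:
  assumes "is_P_score \<Omega> \<P> s" "\<forall>i\<in>{1..n}. A i \<in> \<Omega>"
  shows "G_align_dist s \<P> n A \<ge> 0"
    and "P \<in> sync_families \<P> n \<Longrightarrow> G_align_dist s \<P> n A \<le> (1/2) * cost s n A P"
    and "bdd_below ((\<lambda>P. (1/2) * cost s n A P) ` sync_families \<P> n)"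
    and "(\<lambda>P. (1/2) * cost s n A P) ` sync_families \<P> n \<noteq> {}"
proof -
  show bb: "bdd_below ((\<lambda>P. (1/2) * cost s n A P) ` sync_families \<P> n)"
    using cost_nonneg[OF assms(1) _ assms(2)] by (intro bdd_belowI[of _ 0]) auto
  show ne: "(\<lambda>P. (1/2) * cost s n A P) ` sync_families \<P> n \<noteq> {}"
    using sync_id[OF assms(1)] by blast
  show "G_align_dist s \<P> n A \<ge> 0" unfolding G_def
    using cost_nonneg[OF assms(1) _ assms(2)] ne by (intro cInf_greatest) auto
  show "P \<in> sync_families \<P> n \<Longrightarrow> G_align_dist s \<P> n A \<le> (1/2) * cost s n A P"
    unfolding G_def using bb by (intro cInf_lower) auto
qed

lemma perm_sync:
  assumes "\<sigma> permutes {1..n}" "P \<in> sync_families \<P> n"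
  shows "(\<lambda>i j. P (\<sigma> i) (\<sigma> j)) \<in> sync_families \<P> n"
proof -
  have m: "\<And>x. \<sigma> x \<in> {1..n} \<longleftrightarrow> x \<in> {1..n}" using permutes_in_image[OF assms(1)] by blast
  show ?thesis using assms(2) unfolding sync_families_def
    by (simp only: mem_Collect_eq m) (metis m)
qed

lemma perm_cost:
  assumes "\<sigma> permutes {1..n}"
  shows "cost s n (\<lambda>i. A (\<sigma> i)) (\<lambda>i j. P (\<sigma> i) (\<sigma> j)) = cost s n A P"
proof -
  have "cost s n A P = (\<Sum>i=1..n. (\<lambda>i. \<Sum>j=1..n. s (A i) (A j) (P i j)) (\<sigma> i))"
    unfolding cost_def using sum.permute[OF assms] by (simp add: comp_def)
  also have "\<dots> = (\<Sum>i=1..n. \<Sum>j=1..n. s (A (\<sigma> i)) (A (\<sigma> j)) (P (\<sigma> i) (\<sigma> j)))"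
  proof (rule sum.cong)
    fix i show "(\<lambda>i. \<Sum>j=1..n. s (A i) (A j) (P i j)) (\<sigma> i) = (\<Sum>j=1..n. s (A (\<sigma> i)) (A (\<sigma> j)) (P (\<sigma> i) (\<sigma> j)))"
      using sum.permute[OF assms, of "\<lambda>j. s (A (\<sigma> i)) (A j) (P (\<sigma> i) j)"] by (simp add: comp_def)
  qed simp
  finally show ?thesis unfolding cost_def by simp
qed

lemma D_perm:
  assumes "\<sigma> permutes {1..n}"
  shows "G_align_dist s \<P> n A = G_align_dist s \<P> n (\<lambda>i. A (\<sigma> i))"
proof -
  have inv: "inv \<sigma> permutes {1..n}" using assms by (rule permutes_inv)
  have AA: "(\<lambda>i. A (\<sigma> (inv \<sigma> i))) = A"
    using permutes_inverses(1)[OF assms] by simp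
  have PP: "\<And>P. (\<lambda>i j. P (\<sigma> (inv \<sigma> i)) (\<sigma> (inv \<sigma> j))) = P"
    using permutes_inverses(1)[OF assms] by simp
  have "(\<lambda>P. (1/2) * cost s n A P) ` sync_families \<P> n
      = (\<lambda>P. (1/2) * cost s n (\<lambda>i. A (\<sigma> i)) P) ` sync_families \<P> n"
  proof (intro equalityI subsetI)
    fix x assume "x \<in> (\<lambda>P. (1/2) * cost s n A P) ` sync_families \<P> n"
    then obtain P where P: "P \<in> sync_families \<P> n" "x = (1/2) * cost s n A P" by blast
    have "x = (1/2) * cost s n (\<lambda>i. A (\<sigma> i)) (\<lambda>i j. P (\<sigma> i) (\<sigma> j))"
      using P(2) perm_cost[OF assms, of s A P] by simp
    thus "x \<in> (\<lambda>P. (1/2) * cost s n (\<lambda>i. A (\<sigma> i)) P) ` sync_families \<P> n"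
      using perm_sync[OF assms P(1)] by blast
  next
    fix x assume "x \<in> (\<lambda>P. (1/2) * cost s n (\<lambda>i. A (\<sigma> i)) P) ` sync_families \<P> n"
    then obtain P where P: "P \<in> sync_families \<P> n" "x = (1/2) * cost s n (\<lambda>i. A (\<sigma> i)) P" by blast
    have "x = (1/2) * cost s n A (\<lambda>i j. P (inv \<sigma> i) (inv \<sigma> j))"
      using P perm_cost[OF inv, of s "\<lambda>i. A (\<sigma> i)" P] AA by simp
    thus "x \<in> (\<lambda>P. (1/2) * cost s n A P) ` sync_families \<P> n"
      using perm_sync[OF inv P(1)] by blast
  qed
  thus ?thesis unfolding G_def by simp
qed

lemma sum_ind:
  assumes "n \<ge> 1"
  shows "(\<Sum>i=1..n. \<Sum>j=1..n. (if i = 1 \<and> j \<noteq> 1 then c else 0)) = (real n - 1) * (c::real)"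
proof -
  have "(\<Sum>i=1..n. \<Sum>j=1..n. (if i = 1 \<and> j \<noteq> 1 then c else 0))
      = (\<Sum>i=1..n. if i = 1 then (\<Sum>j=1..n. (if j \<noteq> 1 then c else 0)) else 0)"
    by (intro sum.cong) auto
  also have "\<dots> = (\<Sum>j=1..n. (if j \<noteq> 1 then c else 0))" using assms by simp
  also have "\<dots> = (\<Sum>j\<in>{1..n}-{1}. c)"
    by (rule sum.mono_neutral_cong_right) auto
  also have "\<dots> = (real n - 1) * c" using assms by simp
  finally show ?thesis .
qed

lemma tri_fixed:
  fixes \<Omega> \<P> :: "'m::finite mat set" and s :: "'m mat \<Rightarrow> 'm mat \<Rightarrow> 'm mat \<Rightarrow> real"
  assumes ps: "is_P_score \<Omega> \<P> s" and n: "n \<ge> 2" and A: "\<forall>i\<in>{1..Suc n}. A i \<in> \<Omega>"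
    and p: "\<forall>k\<in>{1..n}. p k \<in> sync_families \<P> n"
  shows "G_align_dist s \<P> n A \<le> (\<Sum>k=1..n. (1/2) * cost s n (A(k := A (Suc n))) (p k))"
proof -
  define N where "N = Suc n"
  have I1: "mat 1 \<in> \<P>" using ps unfolding is_P_score_def by blast
  have Iinv: "\<And>P. P \<in> \<P> \<Longrightarrow> invertible P \<and> matrix_inv P \<in> \<P>" using ps unfolding is_P_score_def by blast
  have Imul: "\<And>P P'. P \<in> \<P> \<Longrightarrow> P' \<in> \<P> \<Longrightarrow> P ** P' \<in> \<P>" using ps unfolding is_P_score_def by blast
  have Snn: "\<And>X Y P. X \<in> \<Omega> \<Longrightarrow> Y \<in> \<Omega> \<Longrightarrow> P \<in> \<P> \<Longrightarrow> s X Y P \<ge> 0" using ps unfolding is_P_score_def by blast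
  have S0: "\<And>X. X \<in> \<Omega> \<Longrightarrow> s X X (mat 1) = 0" using ps unfolding is_P_score_def by blast
  have Ssym: "\<And>X Y P. X \<in> \<Omega> \<Longrightarrow> Y \<in> \<Omega> \<Longrightarrow> P \<in> \<P> \<Longrightarrow> s X Y P = s Y X (matrix_inv P)"
    using ps unfolding is_P_score_def by blast
  have Stri: "\<And>X Y Z P P'. X \<in> \<Omega> \<Longrightarrow> Y \<in> \<Omega> \<Longrightarrow> Z \<in> \<Omega> \<Longrightarrow> P \<in> \<P> \<Longrightarrow> P' \<in> \<P>
        \<Longrightarrow> s X Z (P ** P') \<le> s X Y P + s Y Z P'"
    using ps unfolding is_P_score_def by blast
  have pin: "\<And>k i j. k \<in> {1..n} \<Longrightarrow> i \<in> {1..n} \<Longrightarrow> j \<in> {1..n} \<Longrightarrow> p k i j \<in> \<P>"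
    using p unfolding sync_families_def by auto
  have AO: "\<And>i. i \<in> {1..n} \<Longrightarrow> A i \<in> \<Omega>" using A by auto
  have AN: "A N \<in> \<Omega>" using A N_def by auto
  have n1: "1 \<in> {1..n}" using n by auto
  define r where "r k = s (A 1) (A N) (p k 1 k)" for k
  have fin: "finite (r ` {2..n})" "r ` {2..n} \<noteq> {}" using n by auto
  obtain b where b: "b \<in> {2..n}" "r b = Min (r ` {2..n})"
    using Min_in[OF fin] by (metis imageE)
  have bmin: "\<And>k. k \<in> {2..n} \<Longrightarrow> r b \<le> r k" using b Min_le[OF fin(1)] by auto
  have b1: "b \<in> {1..n}" "b \<noteq> 1" using b by auto
  define R where "R = p b 1 b"
  define P1 where "P1 = p 1"
  define h where "h i = (if i = 1 then R else mat 1)" for i :: nat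
  define Q where "Q i j = h i ** P1 i j ** matrix_inv (h j)" for i j
  have R: "R \<in> \<P>" unfolding R_def using pin[OF b1(1) n1 b1(1)] .
  have hP: "\<And>i. h i \<in> \<P>" unfolding h_def using R I1 by auto
  have hinv: "\<And>i. matrix_inv (h i) ** h i = mat 1 \<and> h i ** matrix_inv (h i) = mat 1"
    using minv Iinv[OF hP] by blast
  have hiP: "\<And>i. matrix_inv (h i) \<in> \<P>" using Iinv[OF hP] by blast
  have P1s: "P1 \<in> sync_families \<P> n" unfolding P1_def using p n1 by auto
  have P1in: "\<And>i j. i \<in> {1..n} \<Longrightarrow> j \<in> {1..n} \<Longrightarrow> P1 i j \<in> \<P>"
    unfolding P1_def using pin n1 by auto
  have P1c: "\<And>i j k. i \<in> {1..n} \<Longrightarrow> j \<in> {1..n} \<Longrightarrow> k \<in> {1..n} \<Longrightarrow> P1 i k ** P1 k j = P1 i j"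
    using P1s unfolding sync_families_def by auto
  have P1d: "\<And>i. i \<in> {1..n} \<Longrightarrow> P1 i i = mat 1"
    using P1s unfolding sync_families_def by auto
  have Qs: "Q \<in> sync_families \<P> n"
    unfolding sync_families_def
  proof (intro CollectI conjI ballI)
    fix i j assume "i \<in> {1..n}" "j \<in> {1..n}"
    thus "Q i j \<in> \<P>" unfolding Q_def using Imul hP hiP P1in by metis
  next
    fix i j k assume ijk: "i \<in> {1..n}" "j \<in> {1..n}" "k \<in> {1..n}"
    have "Q i k ** Q k j = (h i ** P1 i k) ** ((matrix_inv (h k) ** h k) ** (P1 k j ** matrix_inv (h j)))"
      unfolding Q_def by (simp add: matrix_mul_assoc)
    also have "\<dots> = h i ** (P1 i k ** P1 k j) ** matrix_inv (h j)"
      using hinv by (simp add: matrix_mul_assoc)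
    also have "\<dots> = Q i j" unfolding Q_def using P1c[OF ijk(1,2,3)] by simp
    finally show "Q i k ** Q k j = Q i j" .
  next
    fix i assume "i \<in> {1..n}"
    thus "Q i i = mat 1" unfolding Q_def using P1d hinv by simp
  qed
  have mi1: "matrix_inv (mat 1 :: 'm mat) = mat 1"
    using minv(1)[of "mat 1 :: 'm mat"] Iinv[OF I1] by simp
  define A1 where "A1 = A(1 := A N)"
  define e where "e i j = (if i = 1 \<and> j \<noteq> 1 then r b else 0) + (if j = 1 \<and> i \<noteq> 1 then r b else 0)" for i j :: nat
  have A1O: "\<And>i. i \<in> {1..n} \<Longrightarrow> A1 i \<in> \<Omega>" unfolding A1_def using AO AN by auto
  have tm: "s (A i) (A j) (Q i j) \<le> s (A1 i) (A1 j) (P1 i j) + e i j"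
    if ij: "i \<in> {1..n}" "j \<in> {1..n}" for i j
  proof (cases "i = 1")
    case True
    show ?thesis
    proof (cases "j = 1")
      case True
      have "Q i j = mat 1" using Qs ij \<open>i = 1\<close> True unfolding sync_families_def by auto
      thus ?thesis using S0[OF AO[OF ij(1)]] Snn[OF A1O[OF ij(1)] A1O[OF ij(2)] P1in[OF ij]] \<open>i = 1\<close> True
        unfolding e_def by simp
    next
      case False
      have Q: "Q i j = R ** P1 1 j" unfolding Q_def h_def using \<open>i = 1\<close> False mi1 by simp
      have "s (A 1) (A j) (R ** P1 1 j) \<le> s (A 1) (A N) R + s (A N) (A j) (P1 1 j)"
        using Stri[OF AO[OF n1] AN AO[OF ij(2)] R P1in[OF n1 ij(2)]] .
      thus ?thesis using Q \<open>i = 1\<close> False unfolding e_def r_def R_def[symmetric] A1_def by simp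
    qed
  next
    case False
    show ?thesis
    proof (cases "j = 1")
      case True
      have Q: "Q i j = P1 i 1 ** matrix_inv R" unfolding Q_def h_def using \<open>j = 1\<close> False by simp
      have "s (A i) (A 1) (P1 i 1 ** matrix_inv R) \<le> s (A i) (A N) (P1 i 1) + s (A N) (A 1) (matrix_inv R)"
        using Stri[OF AO[OF ij(1)] AN AO[OF n1] P1in[OF ij(1) n1]] Iinv[OF R] by blast
      moreover have "s (A N) (A 1) (matrix_inv R) = r b"
        unfolding r_def R_def[symmetric] using Ssym[OF AO[OF n1] AN R] by simp
      ultimately show ?thesis using Q \<open>j = 1\<close> False unfolding e_def A1_def by simp
    next
      case False
      have Q: "Q i j = P1 i j" unfolding Q_def h_def using \<open>i \<noteq> 1\<close> False mi1 by simp
      thus ?thesis using \<open>i \<noteq> 1\<close> False unfolding e_def A1_def by simp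
    qed
  qed
  have "cost s n A Q \<le> (\<Sum>i=1..n. \<Sum>j=1..n. s (A1 i) (A1 j) (P1 i j) + e i j)"
    unfolding cost_def using tm by (intro sum_mono) auto
  also have "\<dots> = cost s n A1 P1 + (\<Sum>i=1..n. \<Sum>j=1..n. e i j)"
    unfolding cost_def by (simp add: sum.distrib)
  also have "(\<Sum>i=1..n. \<Sum>j=1..n. e i j) = 2 * ((real n - 1) * r b)"
  proof -
    have "(\<Sum>i=1..n. \<Sum>j=1..n. e i j) = (\<Sum>i=1..n. \<Sum>j=1..n. (if i = 1 \<and> j \<noteq> 1 then r b else 0))
       + (\<Sum>i=1..n. \<Sum>j=1..n. (if j = 1 \<and> i \<noteq> 1 then r b else 0))"
      unfolding e_def by (simp add: sum.distrib)
    also have "(\<Sum>i=1..n. \<Sum>j=1..n. (if j = 1 \<and> i \<noteq> 1 then r b else 0))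
       = (\<Sum>j=1..n. \<Sum>i=1..n. (if j = 1 \<and> i \<noteq> 1 then r b else 0))"
      by (rule sum.swap)
    finally show ?thesis using sum_ind[of n "r b"] n by simp
  qed
  finally have cQ: "cost s n A Q \<le> cost s n A1 P1 + 2 * ((real n - 1) * r b)" .
  have ck: "cost s n (A(k := A N)) (p k) \<ge> 2 * r k" if k: "k \<in> {2..n}" for k
  proof -
    have k1: "k \<in> {1..n}" "k \<noteq> 1" using k by auto
    define Ak where "Ak = A(k := A N)"
    define f where "f x = s (Ak (fst x)) (Ak (snd x)) (p k (fst x) (snd x))" for x
    have AkO: "\<And>i. i \<in> {1..n} \<Longrightarrow> Ak i \<in> \<Omega>" unfolding Ak_def using AO AN by auto
    have "cost s n Ak (p k) = sum f ({1..n} \<times> {1..n})"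
      unfolding cost_def f_def by (simp add: sum.cartesian_product split_def)
    also have "\<dots> \<ge> sum f {(1, k), (k, 1)}"
      by (rule sum_mono2) (use k1 n1 AkO pin Snn in \<open>auto simp: f_def\<close>)
    also have "sum f {(1, k), (k, 1)} = f (1, k) + f (k, 1)" using k1 by simp
    also have "f (1, k) = r k" unfolding f_def r_def Ak_def using k1 by simp
    also have "f (k, 1) = r k"
    proof -
      have "p k k 1 = matrix_inv (p k 1 k)" using sync_inv[OF ps _ n1 k1(1)] p k1 by blast
      hence "f (k, 1) = s (A N) (A 1) (matrix_inv (p k 1 k))" unfolding f_def Ak_def using k1 by simp
      also have "\<dots> = r k" unfolding r_def using Ssym[OF AO[OF n1] AN pin[OF k1(1) n1 k1(1)]] by simp
      finally show ?thesis .
    qed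
    finally show ?thesis unfolding Ak_def by (simp add: fun_upd_def)
  qed
  have "(real n - 1) * r b = (\<Sum>k=2..n. r b)" using n by simp
  also have "\<dots> \<le> (\<Sum>k=2..n. r k)" using bmin by (intro sum_mono) auto
  also have "\<dots> \<le> (\<Sum>k=2..n. (1/2) * cost s n (A(k := A N)) (p k))"
    using ck by (intro sum_mono) force
  finally have rs: "(real n - 1) * r b \<le> (\<Sum>k=2..n. (1/2) * cost s n (A(k := A N)) (p k))" .
  have "G_align_dist s \<P> n A \<le> (1/2) * cost s n A Q"
    using D_props(2)[OF ps _ Qs] AO by blast
  also have "\<dots> \<le> (1/2) * cost s n A1 P1 + (\<Sum>k=2..n. (1/2) * cost s n (A(k := A N)) (p k))"
    using cQ rs by linarith
  also have "\<dots> = (\<Sum>k=1..n. (1/2) * cost s n (A(k := A N)) (p k))"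
  proof -
    have "{1..n} = insert 1 {2..n}" using n by auto
    thus ?thesis unfolding A1_def P1_def by simp
  qed
  finally show ?thesis unfolding N_def .
qed

lemma tri:
  fixes \<Omega> \<P> :: "'m::finite mat set" and s :: "'m mat \<Rightarrow> 'm mat \<Rightarrow> 'm mat \<Rightarrow> real"
  assumes ps: "is_P_score \<Omega> \<P> s" and n: "n \<ge> 2" and A: "\<forall>i\<in>{1..Suc n}. A i \<in> \<Omega>"
  shows "G_align_dist s \<P> n A \<le> (\<Sum>k=1..n. G_align_dist s \<P> n (A(k := A (Suc n))))"
proof (rule field_le_epsilon)
  fix \<epsilon> :: real assume e: "0 < \<epsilon>"
  have npos: "real n > 0" using n by simp
  have "\<forall>k\<in>{1..n}. \<exists>P \<in> sync_families \<P> n.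
      (1/2) * cost s n (A(k := A (Suc n))) P < G_align_dist s \<P> n (A(k := A (Suc n))) + \<epsilon> / n"
  proof
    fix k assume k: "k \<in> {1..n}"
    have Ak: "\<forall>i\<in>{1..n}. (A(k := A (Suc n))) i \<in> \<Omega>" using A by auto
    have "Inf ((\<lambda>P. (1/2) * cost s n (A(k := A (Suc n))) P) ` sync_families \<P> n)
        < G_align_dist s \<P> n (A(k := A (Suc n))) + \<epsilon> / n"
      unfolding G_def using e npos by simp
    then obtain x where "x \<in> (\<lambda>P. (1/2) * cost s n (A(k := A (Suc n))) P) ` sync_families \<P> n"
      "x < G_align_dist s \<P> n (A(k := A (Suc n))) + \<epsilon> / n"
      using cInf_less_iff[OF D_props(4)[OF ps Ak] D_props(3)[OF ps Ak]] by blast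
    thus "\<exists>P \<in> sync_families \<P> n.
      (1/2) * cost s n (A(k := A (Suc n))) P < G_align_dist s \<P> n (A(k := A (Suc n))) + \<epsilon> / n"
      by blast
  qed
  then obtain p where p: "\<forall>k\<in>{1..n}. p k \<in> sync_families \<P> n \<and>
      (1/2) * cost s n (A(k := A (Suc n))) (p k) < G_align_dist s \<P> n (A(k := A (Suc n))) + \<epsilon> / n"
    by metis
  have "G_align_dist s \<P> n A \<le> (\<Sum>k=1..n. (1/2) * cost s n (A(k := A (Suc n))) (p k))"
    using tri_fixed[OF ps n A] p by blast
  also have "\<dots> \<le> (\<Sum>k=1..n. G_align_dist s \<P> n (A(k := A (Suc n))) + \<epsilon> / n)"
    using p by (intro sum_mono) (auto intro: less_imp_le)
  also have "\<dots> = (\<Sum>k=1..n. G_align_dist s \<P> n (A(k := A (Suc n)))) + \<epsilon>"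
    using npos by (simp add: sum.distrib)
  finally show "G_align_dist s \<P> n A \<le> (\<Sum>k=1..n. G_align_dist s \<P> n (A(k := A (Suc n)))) + \<epsilon>" .
qed

theorem theorem2:
  fixes \<Omega> \<P> :: "'m::finite mat set"
    and s :: "'m mat \<Rightarrow> 'm mat \<Rightarrow> 'm mat \<Rightarrow> real"
    and n :: nat
  assumes "is_P_score \<Omega> \<P> s"
    and "n \<ge> 2"
  shows "pseudo_n_metric \<Omega> n (G_align_dist s \<P> n)"
  unfolding pseudo_n_metric_def
proof (intro conjI allI impI ballI)
  fix A :: "nat \<Rightarrow> 'm mat" assume "\<forall>i\<in>{1..n}. A i \<in> \<Omega>"
  thus "0 \<le> G_align_dist s \<P> n A" using D_props(1)[OF assms(1)] by blast
next
  fix A :: "nat \<Rightarrow> 'm mat" and \<sigma> assume "\<sigma> permutes {1..n}"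
  thus "G_align_dist s \<P> n A = G_align_dist s \<P> n (\<lambda>i. A (\<sigma> i))" by (rule D_perm)
next
  fix A :: "nat \<Rightarrow> 'm mat" assume "\<forall>i\<in>{1..Suc n}. A i \<in> \<Omega>"
  thus "G_align_dist s \<P> n A \<le> (\<Sum>i=1..n. G_align_dist s \<P> n (A(i := A (Suc n))))"
    using tri[OF assms] by blast
next
  fix X assume X: "X \<in> \<Omega>"
  have "s X X (mat 1) = 0" using assms(1) X unfolding is_P_score_def by blast
  hence c0: "cost s n (\<lambda>_. X) (\<lambda>i j. mat 1) = 0"
    unfolding cost_def by simp
  have "G_align_dist s \<P> n (\<lambda>_. X) \<le> 0"
    using D_props(2)[where A="\<lambda>_. X" and n=n, OF assms(1) _ sync_id[OF assms(1)]] X c0 by simp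
  moreover have "G_align_dist s \<P> n (\<lambda>_. X) \<ge> 0"
    using D_props(1)[where A="\<lambda>_. X" and n=n, OF assms(1)] X by simp
  ultimately show "G_align_dist s \<P> n (\<lambda>_. X) = 0" by simp
qed

end
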